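(* Let $n\ge 2$, $d\ge 1$, and let $(p;v)$ be the canonical pair of a line $\ell$ in $[n]^d$ of odd weight. Then $\sigma(p)\equiv\sigma(p+(i-1)v)\pmod 2$ for every integer $1\le i\le\lfloor n/2\rfloor$, and $\sigma(p)\not\equiv\sigma(p+(i-1)v)\pmod 2$ for every integer $\lceil n/2\rceil< i\le n$.
   Context: Let $[n]=\{1,\dots,n\}$. For $p\in[n]^d$ and $v\in\{-1,0,1\}^d$ with $v\ne\vec 0$, if $p+tv\in[n]^d$ for all $0\le t\le n-1$, the set $\ell=\{p,p+v,\dots,p+(n-1)v\}$ is a line with initial point $p$ and direction $v$. The canonical pair of a line is its unique representation $(p;v)$ in which the first nonzero coordinate of $v$ equals $+1$; the weight of the line is the number of nonzero coordinates of this $v$. For $p\in[n]^d$ and $i\in[n]$ let $\pi_i(p)=|\{j\in[d]:p_j=i\}|$, and let $\sigma(p)=\sum_{1\le i\le n/2}\pi_i(p)$. *)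

theory Defs
  imports Complex_Main "HOL-Number_Theory.Cong"
begin

text \<open>Points of [n]^d and directions are represented as functions nat => int;
  only the coordinates j in {1..d} are meaningful.\<close>

definition in_grid :: "nat \<Rightarrow> nat \<Rightarrow> (nat \<Rightarrow> int) \<Rightarrow> bool" where
  "in_grid n d p \<longleftrightarrow> (\<forall>j\<in>{1..d}. 1 \<le> p j \<and> p j \<le> int n)"

definition shift :: "(nat \<Rightarrow> int) \<Rightarrow> int \<Rightarrow> (nat \<Rightarrow> int) \<Rightarrow> (nat \<Rightarrow> int)" where
  "shift p t v = (\<lambda>j. p j + t * v j)"

definition is_direction :: "nat \<Rightarrow> (nat \<Rightarrow> int) \<Rightarrow> bool" where
  "is_direction d v \<longleftrightarrow> (\<forall>j\<in>{1..d}. v j \<in> {-1, 0, 1}) \<and> (\<exists>j\<in>{1..d}. v j \<noteq> 0)"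

definition is_line :: "nat \<Rightarrow> nat \<Rightarrow> (nat \<Rightarrow> int) \<Rightarrow> (nat \<Rightarrow> int) \<Rightarrow> bool" where
  "is_line n d p v \<longleftrightarrow> in_grid n d p \<and> is_direction d v \<and>
     (\<forall>t::nat. t \<le> n - 1 \<longrightarrow> in_grid n d (shift p (int t) v))"

definition canonical_dir :: "nat \<Rightarrow> (nat \<Rightarrow> int) \<Rightarrow> bool" where
  "canonical_dir d v \<longleftrightarrow> (\<exists>k\<in>{1..d}. v k = 1 \<and> (\<forall>j\<in>{1..d}. j < k \<longrightarrow> v j = 0))"

definition weight :: "nat \<Rightarrow> (nat \<Rightarrow> int) \<Rightarrow> nat" where
  "weight d v = card {j\<in>{1..d}. v j \<noteq> 0}"

definition pi_count :: "nat \<Rightarrow> nat \<Rightarrow> (nat \<Rightarrow> int) \<Rightarrow> nat" where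
  "pi_count d i p = card {j\<in>{1..d}. p j = int i}"

definition sigma :: "nat \<Rightarrow> nat \<Rightarrow> (nat \<Rightarrow> int) \<Rightarrow> nat" where
  "sigma n d p = (\<Sum>i\<in>{i::nat. 1 \<le> i \<and> real i \<le> real n / 2}. pi_count d i p)"

end

theory Submission
  imports Defs
begin

definition fcnt :: "nat \<Rightarrow> int \<Rightarrow> nat" where
  "fcnt n x = (if 1 \<le> x \<and> 2 * x \<le> int n then 1 else 0)"

lemma inner_sum:
  "(\<Sum>i\<in>{i::nat. 1 \<le> i \<and> real i \<le> real n / 2}. (if x = int i then 1 else 0::nat)) = fcnt n x"
proof -
  have "(\<Sum>i\<in>{i::nat. 1 \<le> i \<and> real i \<le> real n / 2}. (if x = int i then 1 else 0::nat))
      = (\<Sum>i\<in>{i::nat. 1 \<le> i \<and> real i \<le> real n / 2}. (if i = nat x \<and> x \<ge> 0 then 1 else 0::nat))"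
    by (rule sum.cong) auto
  also have "\<dots> = (if x \<ge> 0 then (\<Sum>i\<in>{i::nat. 1 \<le> i \<and> real i \<le> real n / 2}. (if i = nat x then 1 else 0::nat)) else 0)"
    by auto
  also have "\<dots> = fcnt n x"
  proof -
    have fin: "finite {i::nat. 1 \<le> i \<and> real i \<le> real n / 2}"
      by (rule finite_subset[of _ "{..n}"]) auto
    show ?thesis
      using fin unfolding fcnt_def by (auto simp: sum.delta' field_simps)
  qed
  finally show ?thesis .
qed

lemma sigma_alt: "sigma n d q = (\<Sum>j\<in>{1..d}. fcnt n (q j))"
proof -
  have fin: "finite {i::nat. 1 \<le> i \<and> real i \<le> real n / 2}"
    by (rule finite_subset[of _ "{..n}"]) auto
  have "sigma n d q = (\<Sum>i\<in>{i::nat. 1 \<le> i \<and> real i \<le> real n / 2}. \<Sum>j\<in>{1..d}. (if q j = int i then 1 else 0::nat))"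
    unfolding sigma_def pi_count_def
    by (rule sum.cong) (auto simp: sum.If_cases Int_def)
  also have "\<dots> = (\<Sum>j\<in>{1..d}. \<Sum>i\<in>{i::nat. 1 \<le> i \<and> real i \<le> real n / 2}. (if q j = int i then 1 else 0::nat))"
    by (rule sum.swap)
  also have "\<dots> = (\<Sum>j\<in>{1..d}. fcnt n (q j))"
    by (rule sum.cong[OF refl], rule inner_sum)
  finally show ?thesis .
qed

theorem lemma19:
  fixes n d :: nat and p v :: "nat \<Rightarrow> int"
  assumes "n \<ge> 2" and "d \<ge> 1"
    and "is_line n d p v" and "canonical_dir d v"
    and "odd (weight d v)"
  shows "(\<forall>i::nat. 1 \<le> i \<and> real i \<le> real n / 2 \<longrightarrow>
            [sigma n d p = sigma n d (shift p (int i - 1) v)] (mod 2))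
       \<and> (\<forall>i::nat. real_of_int \<lceil>real n / 2\<rceil> < real i \<and> i \<le> n \<longrightarrow>
            \<not> [sigma n d p = sigma n d (shift p (int i - 1) v)] (mod 2))"
proof -
  have L: "in_grid n d p" "is_direction d v" "in_grid n d (shift p (int (n - 1)) v)"
    using assms(3) unfolding is_line_def by auto
  have vals: "v j \<in> {-1,0,1}" if "j \<in> {1..d}" for j
    using L(2) that unfolding is_direction_def by auto
  have pg: "1 \<le> p j \<and> p j \<le> int n" if "j \<in> {1..d}" for j
    using L(1) that unfolding in_grid_def by auto
  have eg: "1 \<le> p j + int (n - 1) * v j \<and> p j + int (n - 1) * v j \<le> int n" if "j \<in> {1..d}" for j
    using L(3) that unfolding in_grid_def shift_def by auto
  have p1: "p j = 1" if "j \<in> {1..d}" "v j = 1" for j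
    using pg[OF that(1)] eg[OF that(1)] that(2) assms(1) by auto
  have pm: "p j = int n" if "j \<in> {1..d}" "v j = -1" for j
    using pg[OF that(1)] eg[OF that(1)] that(2) assms(1) by auto
  have part1: "[sigma n d p = sigma n d (shift p (int i - 1) v)] (mod 2)"
    if i: "1 \<le> i" "real i \<le> real n / 2" for i :: nat
  proof -
    have i2: "2 * int i \<le> int n" using i(2) by linarith
    have "sigma n d p = sigma n d (shift p (int i - 1) v)"
      unfolding sigma_alt
    proof (rule sum.cong[OF refl])
      fix j assume j: "j \<in> {1..d}"
      show "fcnt n (p j) = fcnt n (shift p (int i - 1) v j)"
        using vals[OF j] p1[OF j] pm[OF j] i(1) i2 assms(1)
        unfolding shift_def fcnt_def by auto
    qed
    then show ?thesis by simp
  qed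
  have part2: "\<not> [sigma n d p = sigma n d (shift p (int i - 1) v)] (mod 2)"
    if i: "real_of_int \<lceil>real n / 2\<rceil> < real i" "i \<le> n" for i :: nat
  proof
    assume c: "[sigma n d p = sigma n d (shift p (int i - 1) v)] (mod 2)"
    have "\<lceil>real n / 2\<rceil> < int i" using i(1) by linarith
    then have "\<lceil>real n / 2\<rceil> + 1 \<le> int i" by simp
    moreover have "real n / 2 \<le> real_of_int \<lceil>real n / 2\<rceil>" by (rule le_of_int_ceiling)
    ultimately have "real n / 2 + 1 \<le> real i" by linarith
    then have i2: "int n + 2 \<le> 2 * int i" by linarith
    define q where "q = shift p (int i - 1) v"
    define g where "g j = (if v j = 0 then 2 * fcnt n (p j) else 1)" for j
    have "sigma n d p + sigma n d q = (\<Sum>j\<in>{1..d}. fcnt n (p j) + fcnt n (q j))"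
      unfolding sigma_alt by (simp add: sum.distrib)
    also have "\<dots> = (\<Sum>j\<in>{1..d}. g j)"
    proof (rule sum.cong[OF refl])
      fix j assume j: "j \<in> {1..d}"
      show "fcnt n (p j) + fcnt n (q j) = g j"
        using vals[OF j] p1[OF j] pm[OF j] i(2) i2 assms(1)
        unfolding q_def g_def shift_def fcnt_def by auto
    qed
    also have "\<dots> = (\<Sum>j\<in>{1..d} \<inter> {j. v j = 0}. 2 * fcnt n (p j)) + (\<Sum>j\<in>{1..d} \<inter> - {j. v j = 0}. 1)"
      unfolding g_def by (rule sum.If_cases) simp
    also have "(\<Sum>j\<in>{1..d} \<inter> - {j. v j = 0}. 1::nat) = weight d v"
      unfolding weight_def by (simp add: Int_def)
    finally have "sigma n d p + sigma n d q = 2 * (\<Sum>j\<in>{1..d} \<inter> {j. v j = 0}. fcnt n (p j)) + weight d v"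
      by (simp add: sum_distrib_left)
    then have "odd (sigma n d p + sigma n d q)" using assms(5) by simp
    moreover have "sigma n d p mod 2 = sigma n d q mod 2" using c unfolding q_def cong_def .
    ultimately show False by presburger
  qed
  show ?thesis using part1 part2 by blast
qed

end
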